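(* Let $V:[0,1]\to\mathbb R$ be continuous and let $\{\pi_\kappa\}_{\kappa>0}$ be probability measures on $[0,1]$, absolutely continuous with respect to Lebesgue measure, satisfying a Large Deviation Principle with speed $2\kappa^{-1}$ and rate function $V$ as $\kappa\to0$: $$-\inf_{x\in\mathring E}V(x)\le\liminf_{\kappa\to0}\frac\kappa2\log\pi_\kappa(E)\le\limsup_{\kappa\to0}\frac\kappa2\log\pi_\kappa(E)\le-\inf_{x\in\overline E}V(x)$$ for all Borel $E\subset[0,1]$. For $q\in\mathcal P([0,1])$ define $$\mathcal F_\kappa(q):=\begin{cases}\frac\kappa2\int_0^1\frac{dq}{d\pi_\kappa}\log\Big(\frac{dq}{d\pi_\kappa}\Big)d\pi_\kappa&\text{if }q\ll\pi_\kappa,\\+\infty&\text{otherwise,}\end{cases}\qquad \mathcal V(q):=\int_0^1\{V(x)-\min V\}\,dq(x).$$ Then $\mathcal F_\kappa$ $\Gamma$-converges to $\mathcal V$ as $\kappa\to0$ with respect to weak-$*$ convergence of probability measures: for every $q_\kappa\overset{*}{\rightharpoonup}q$, $\mathcal V(q)\le\liminf_{\kappa\to0}\mathcal F_\kappa(q_\kappa)$, and for every $q$ there exist $q_\kappa\overset{*}{\rightharpoonup}q$ with $\limsup_{\kappa\to0}\mathcal F_\kappa(q_\kappa)\le\mathcal V(q)$.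
   Context: $\mathring E$ and $\overline E$ denote interior and closure of $E$ in $[0,1]$. Weak-$*$ convergence $q_\kappa\overset{*}{\rightharpoonup}q$ of probability measures on $[0,1]$ means $\int\varphi\,dq_\kappa\to\int\varphi\,dq$ for all bounded continuous $\varphi$. (In the paper $\pi_\kappa$ is the reference measure $w_\kappa z_\kappa\,dx$ built from the principal eigenfunctions of the Kimura operators, but the statement only uses the large deviation hypothesis.) *)

theory Defs
  imports "HOL-Probability.Probability"
begin

definition prob01 :: "real measure \<Rightarrow> bool" where
  "prob01 M \<longleftrightarrow> prob_space M \<and> sets M = sets (restrict_space borel {0..1::real})"

definition scaled_log :: "real \<Rightarrow> real \<Rightarrow> ereal" where
  "scaled_log k p = (if p = 0 then -\<infinity> else ereal (k / 2 * ln p))"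

text \<open>Weak-* convergence q_kappa -> q as kappa -> 0+, tested against continuous functions
  on [0,1] (which are exactly the bounded continuous functions on [0,1]).\<close>
definition weak_star_conv :: "(real \<Rightarrow> real measure) \<Rightarrow> real measure \<Rightarrow> bool" where
  "weak_star_conv qs q \<longleftrightarrow>
     (\<forall>\<phi>::real \<Rightarrow> real. continuous_on {0..1} \<phi> \<longrightarrow>
        ((\<lambda>\<kappa>. integral\<^sup>L (qs \<kappa>) \<phi>) \<longlongrightarrow> integral\<^sup>L q \<phi>) (at_right 0))"

text \<open>Scaled relative entropy F_kappa(q). Since f log f \<ge> -1/e, the integral is well defined
  in (-infinity, +infinity]; it is +infinity exactly when f log f is not integrable.\<close>
definition free_energy :: "real \<Rightarrow> real measure \<Rightarrow> real measure \<Rightarrow> ereal" where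
  "free_energy \<kappa> \<pi> q =
     (if absolutely_continuous \<pi> q then
        (let f = (\<lambda>x. enn2real (RN_deriv \<pi> q x)) in
          if integrable \<pi> (\<lambda>x. f x * ln (f x))
          then ereal (\<kappa> / 2 * (\<integral>x. f x * ln (f x) \<partial>\<pi>))
          else \<infinity>)
      else \<infinity>)"

definition pot_energy :: "(real \<Rightarrow> real) \<Rightarrow> real measure \<Rightarrow> real" where
  "pot_energy V q = (\<integral>x. (V x - (INF y\<in>{0..1}. V y)) \<partial>q)"

end

theory Submission
  imports Defs
begin

lemma p01_space: "prob01 M \<Longrightarrow> space M = {0..1}"
  unfolding prob01_def by (metis sets_eq_imp_space_eq space_restrict_space space_borel inf_top_right)

lemma p01_meas: "prob01 M \<Longrightarrow> f \<in> borel_measurable (restrict_space borel {0..1}) \<Longrightarrow> f \<in> borel_measurable M"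
  unfolding prob01_def using measurable_cong_sets by blast

lemma p01_cont_meas: "prob01 M \<Longrightarrow> continuous_on {0..1} f \<Longrightarrow> f \<in> borel_measurable M"
  using p01_meas borel_measurable_continuous_on_restrict by blast

lemma p01_sets: "prob01 M \<Longrightarrow> A \<in> sets borel \<Longrightarrow> A \<subseteq> {0..1} \<Longrightarrow> A \<in> sets M"
  unfolding prob01_def by (simp add: sets_restrict_space_iff)

lemma p01_prob: "prob01 M \<Longrightarrow> prob_space M"
  unfolding prob01_def by simp

lemma p01_integrable:
  fixes f :: "real \<Rightarrow> real"
  assumes "prob01 M" "f \<in> borel_measurable M" "\<And>x. x \<in> {0..1} \<Longrightarrow> \<bar>f x\<bar> \<le> B"
  shows "integrable M f"
proof -
  interpret prob_space M using assms(1) p01_prob by blast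
  show ?thesis
    by (rule integrable_const_bound[where B=B]) (auto simp: assms p01_space[OF assms(1)])
qed

lemma p01_cont_integrable:
  fixes f :: "real \<Rightarrow> real"
  assumes "prob01 M" "continuous_on {0..1} f"
  shows "integrable M f"
proof -
  obtain B where "\<And>x. x \<in> {0..1} \<Longrightarrow> norm (f x) \<le> B"
    using compact_imp_bounded[OF compact_continuous_image[OF assms(2) compact_Icc]]
    unfolding bounded_iff by fastforce
  then show ?thesis using p01_integrable[OF assms(1) p01_cont_meas[OF assms]] by auto
qed

definition idx :: "nat \<Rightarrow> real \<Rightarrow> nat" where
  "idx n x = min (n - 1) (nat \<lfloor>x * real n\<rfloor>)"

definition piece :: "nat \<Rightarrow> nat \<Rightarrow> real set" where
  "piece n i = {x\<in>{0..1}. idx n x = i}"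

lemma idx_lt: "n \<ge> 1 \<Longrightarrow> idx n x < n"
  unfolding idx_def by simp

lemma idx_bounds:
  assumes "n \<ge> 1" "x \<in> {0..1}"
  shows "real (idx n x) / n \<le> x \<and> x \<le> (real (idx n x) + 1) / n"
proof -
  have n: "real n > 0" using assms by simp
  have fl: "real_of_int \<lfloor>x * n\<rfloor> \<le> x * n" "x * n < real_of_int \<lfloor>x * n\<rfloor> + 1" by linarith+
  have f0: "\<lfloor>x * n\<rfloor> \<ge> 0" using assms by simp
  have xn: "x * n \<le> n" using assms by simp
  show ?thesis
  proof (cases "nat \<lfloor>x * real n\<rfloor> \<le> n - 1")
    case True
    then have "idx n x = nat \<lfloor>x * real n\<rfloor>" unfolding idx_def by simp
    then have "real (idx n x) = real_of_int \<lfloor>x * n\<rfloor>" using f0 by simp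
    then show ?thesis using fl n by (simp add: field_simps)
  next
    case False
    then have "idx n x = n - 1" unfolding idx_def by simp
    then have "real (idx n x) = real n - 1" using assms by simp
    moreover have "real n - 1 \<le> x * n" using False f0 fl by linarith
    ultimately show ?thesis using n xn by (simp add: field_simps)
  qed
qed

lemma idx_open:
  assumes "n \<ge> 1" "i < n" "x \<in> {real i / n<..<(real i + 1) / n}"
  shows "idx n x = i"
proof -
  have n: "real n > 0" using assms by simp
  have "real i < x * n" "x * n < real i + 1" using assms n by (auto simp: field_simps)
  then have "\<lfloor>x * n\<rfloor> = int i" by (simp add: floor_eq_iff)
  then show ?thesis unfolding idx_def using assms by simp
qed

lemma idx_left:
  assumes "n \<ge> 1" "i < n"
  shows "idx n (real i / n) = i"
  unfolding idx_def using assms by simp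

lemma idx_meas: "idx n \<in> measurable borel (count_space UNIV)"
  unfolding idx_def by measurable

lemma piece_borel: "piece n i \<in> sets borel"
proof -
  have "piece n i = {0..1} \<inter> (idx n -` {i} \<inter> space borel)" unfolding piece_def by auto
  moreover have "idx n -` {i} \<inter> space borel \<in> sets borel"
    using idx_meas by (rule measurable_sets) simp
  ultimately show ?thesis by simp
qed

lemma piece_sub: "piece n i \<subseteq> {0..1}" unfolding piece_def by auto

lemma step_integral:
  fixes h :: "nat \<Rightarrow> real"
  assumes M: "prob01 M" and n: "n \<ge> 1"
  shows "integrable M (\<lambda>x. h (idx n x)) \<and> (\<integral>x. h (idx n x) \<partial>M) = (\<Sum>i<n. h i * measure M (piece n i))"
proof -
  interpret prob_space M using M p01_prob by blast
  have S: "piece n i \<in> sets M" for i using p01_sets[OF M piece_borel piece_sub] .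
  have eq: "h (idx n x) = (\<Sum>i<n. h i * indicator (piece n i) x)" if "x \<in> space M" for x
  proof -
    have "(\<Sum>i<n. h i * indicator (piece n i) x) = (\<Sum>i<n. if i = idx n x then h i else 0)"
      using that p01_space[OF M] by (intro sum.cong) (auto simp: piece_def indicator_def)
    also have "\<dots> = h (idx n x)" using idx_lt[OF n] by simp
    finally show ?thesis by simp
  qed
  have intI: "integrable M (\<lambda>x. h i * indicator (piece n i) x)" for i
  proof -
    have "integrable M (indicator (piece n i) :: real \<Rightarrow> real)"
      using S by (intro integrable_real_indicator) (simp_all add: S emeasure_finite less_top[symmetric])
    then show ?thesis by simp
  qed
  have int: "integrable M (\<lambda>x. \<Sum>i<n. h i * indicator (piece n i) x)"
    using intI by (rule Bochner_Integration.integrable_sum)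
  have I: "(\<integral>x. (\<Sum>i<n. h i * indicator (piece n i) x) \<partial>M) = (\<Sum>i<n. h i * measure M (piece n i))"
    using intI S by (subst Bochner_Integration.integral_sum) auto
  have e1: "integrable M (\<lambda>x. h (idx n x)) = integrable M (\<lambda>x. \<Sum>i<n. h i * indicator (piece n i) x)"
    by (intro Bochner_Integration.integrable_cong refl eq)
  have e2: "(\<integral>x. h (idx n x) \<partial>M) = (\<integral>x. (\<Sum>i<n. h i * indicator (piece n i) x) \<partial>M)"
    by (intro Bochner_Integration.integral_cong refl eq)
  show ?thesis unfolding e1 e2 using int I by (intro conjI)
qed


lemma young: fixes a b :: real assumes "a \<ge> 0" shows "a * b \<le> a * ln a - a + exp b"
proof (cases "a = 0")
  case True then show ?thesis by simp
next
  case False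
  then have a: "a > 0" using assms by simp
  have "1 + (b - ln a) \<le> exp (b - ln a)" by (rule exp_ge_add_one_self)
  also have "exp (b - ln a) = exp b / a" using a by (simp add: exp_diff)
  finally have "a * (1 + (b - ln a)) \<le> exp b" using a by (simp add: field_simps)
  then show ?thesis by (simp add: algebra_simps)
qed

lemma rn_density:
  assumes P: "prob01 P" and Q: "prob01 Q" and ac: "absolutely_continuous P Q"
  shows "Q = density P (\<lambda>x. ennreal (enn2real (RN_deriv P Q x)))"
proof -
  interpret P: prob_space P using P p01_prob by blast
  interpret Q: prob_space Q using Q p01_prob by blast
  have sets: "sets Q = sets P" using P Q unfolding prob01_def by simp
  have "density P (RN_deriv P Q) = Q" by (rule P.density_RN_deriv[OF ac sets])
  moreover have "AE x in P. RN_deriv P Q x \<noteq> \<infinity>"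
    by (rule P.RN_deriv_finite[OF _ ac sets]) (simp add: Q.sigma_finite_measure_axioms)
  then have "density P (RN_deriv P Q) = density P (\<lambda>x. ennreal (enn2real (RN_deriv P Q x)))"
    by (intro density_cong) (auto elim!: eventually_mono simp: ennreal_enn2real_if)
  ultimately show ?thesis by simp
qed

lemma density_integral:
  fixes g \<phi> :: "real \<Rightarrow> real"
  assumes P: "prob01 P" and Q: "prob01 Q" and Qd: "Q = density P (\<lambda>x. ennreal (g x))"
    and gm: "g \<in> borel_measurable P" and g0: "\<And>x. g x \<ge> 0"
    and \<phi>m: "\<phi> \<in> borel_measurable P" and \<phi>b: "\<And>x. x \<in> {0..1} \<Longrightarrow> \<bar>\<phi> x\<bar> \<le> B"
  shows "integrable P (\<lambda>x. g x * \<phi> x) \<and> (\<integral>x. \<phi> x \<partial>Q) = (\<integral>x. g x * \<phi> x \<partial>P)"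
proof -
  have sets: "sets Q = sets P" using P Q unfolding prob01_def by simp
  have "\<phi> \<in> borel_measurable Q" using \<phi>m measurable_cong_sets[OF sets refl] by blast
  then have iQ: "integrable Q \<phi>" using p01_integrable[where f=\<phi>, OF Q _ \<phi>b] by blast
  have "integrable P (\<lambda>x. g x *\<^sub>R \<phi> x)"
    using iQ unfolding Qd by (subst (asm) integrable_density) (auto simp: gm \<phi>m g0)
  moreover have "(\<integral>x. \<phi> x \<partial>Q) = (\<integral>x. g x *\<^sub>R \<phi> x \<partial>P)"
    unfolding Qd by (rule integral_density) (auto simp: gm \<phi>m g0)
  ultimately show ?thesis by simp
qed

lemma entropy_lower:
  fixes \<phi> :: "real \<Rightarrow> real"
  assumes P: "prob01 P" and Q: "prob01 Q" and ac: "absolutely_continuous P Q"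
    and fint: "integrable P (\<lambda>x. enn2real (RN_deriv P Q x) * ln (enn2real (RN_deriv P Q x)))"
    and \<phi>m: "\<phi> \<in> borel_measurable P" and \<phi>b: "\<And>x. x \<in> {0..1} \<Longrightarrow> \<bar>\<phi> x\<bar> \<le> B"
  shows "(\<integral>x. \<phi> x \<partial>Q) + 1 - (\<integral>x. exp (\<phi> x) \<partial>P)
          \<le> (\<integral>x. enn2real (RN_deriv P Q x) * ln (enn2real (RN_deriv P Q x)) \<partial>P)"
proof -
  interpret P: prob_space P using P p01_prob by blast
  interpret Q: prob_space Q using Q p01_prob by blast
  define f where "f = (\<lambda>x. enn2real (RN_deriv P Q x))"
  have Qd: "Q = density P (\<lambda>x. ennreal (f x))" unfolding f_def by (rule rn_density[OF P Q ac])
  have fm: "f \<in> borel_measurable P" unfolding f_def by measurable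
  have f0: "\<And>x. f x \<ge> 0" unfolding f_def by simp
  have I1: "integrable P (\<lambda>x. f x * \<phi> x) \<and> (\<integral>x. \<phi> x \<partial>Q) = (\<integral>x. f x * \<phi> x \<partial>P)"
    by (rule density_integral[OF P Q Qd fm f0 \<phi>m \<phi>b])
  have I2: "integrable P (\<lambda>x. f x * 1) \<and> (\<integral>x. 1 \<partial>Q) = (\<integral>x. f x * 1 \<partial>P)"
    by (rule density_integral[OF P Q Qd fm f0, where B=1]) auto
  have Q1: "(\<integral>x. 1 \<partial>Q) = (1::real)" using Q.prob_space by simp
  have em: "(\<lambda>x. exp (\<phi> x)) \<in> borel_measurable P" using \<phi>m by measurable
  have ie: "integrable P (\<lambda>x. exp (\<phi> x))"
  proof (rule p01_integrable[OF P em])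
    fix x :: real assume "x \<in> {0..1}"
    then have "\<phi> x \<le> B" using \<phi>b by fastforce
    then show "\<bar>exp (\<phi> x)\<bar> \<le> exp B" by simp
  qed
  have "(\<integral>x. \<phi> x \<partial>Q) + 1 - (\<integral>x. exp (\<phi> x) \<partial>P)
        = (\<integral>x. f x * \<phi> x + f x - exp (\<phi> x) \<partial>P)"
    using I1 I2 Q1 ie by simp
  also have "\<dots> \<le> (\<integral>x. f x * ln (f x) \<partial>P)"
  proof (rule integral_mono)
    show "integrable P (\<lambda>x. f x * ln (f x))" using fint unfolding f_def .
    show "integrable P (\<lambda>x. f x * \<phi> x + f x - exp (\<phi> x))" using I1 I2 ie by auto
    fix x
    have "f x * \<phi> x \<le> f x * ln (f x) - f x + exp (\<phi> x)" by (rule young[OF f0])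
    then show "f x * \<phi> x + f x - exp (\<phi> x) \<le> f x * ln (f x)" by simp
  qed
  finally show ?thesis unfolding f_def .
qed


lemma unif_cont:
  fixes f :: "real \<Rightarrow> real"
  assumes "continuous_on {0..1} f" "e > 0"
  shows "\<exists>N::nat. N \<ge> 1 \<and> (\<forall>x\<in>{0..1}. \<forall>y\<in>{0..1}. \<bar>x - y\<bar> \<le> 1 / real N \<longrightarrow> \<bar>f x - f y\<bar> < e)"
proof -
  have "uniformly_continuous_on {0..1} f" using assms(1) compact_uniformly_continuous by blast
  then obtain d where d: "d > 0" "\<And>x x'. x \<in> {0..1} \<Longrightarrow> x' \<in> {0..1} \<Longrightarrow> dist x' x < d \<Longrightarrow> dist (f x') (f x) < e"
    unfolding uniformly_continuous_on_def using assms(2) by metis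
  obtain N :: nat where N: "N \<noteq> 0" "inverse (real N) < d" using real_arch_inverse d(1) by blast
  show ?thesis
  proof (intro exI conjI ballI impI)
    show "N \<ge> 1" using N by simp
    fix x y :: real assume xy: "x \<in> {0..1}" "y \<in> {0..1}" "\<bar>x - y\<bar> \<le> 1 / real N"
    have "1 / real N < d" using N by (simp add: inverse_eq_divide)
    then have "dist x y < d" using xy(3) by (simp add: dist_real_def)
    then show "\<bar>f x - f y\<bar> < e" using d(2)[OF xy(2) xy(1)] by (simp add: dist_real_def)
  qed
qed

lemma inf_V_zero:
  fixes V :: "real \<Rightarrow> real" and \<pi> :: "real \<Rightarrow> real measure"
  assumes V_cont: "continuous_on {0..1} V"
    and \<pi>_prob: "\<And>\<kappa>. \<kappa> > 0 \<Longrightarrow> prob01 (\<pi> \<kappa>)"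
    and LDP_lower: "\<And>E. E \<in> sets borel \<Longrightarrow> E \<subseteq> {0..1} \<Longrightarrow>
        - (INF x\<in>(top_of_set {0..1}) interior_of E. ereal (V x))
          \<le> Liminf (at_right 0) (\<lambda>\<kappa>. scaled_log \<kappa> (measure (\<pi> \<kappa>) E))"
    and LDP_upper: "\<And>E. E \<in> sets borel \<Longrightarrow> E \<subseteq> {0..1} \<Longrightarrow>
        Limsup (at_right 0) (\<lambda>\<kappa>. scaled_log \<kappa> (measure (\<pi> \<kappa>) E))
          \<le> - (INF x\<in>(top_of_set {0..1}) closure_of E. ereal (V x))"
  shows "(INF y\<in>{0..1}. V y) = 0 \<and> (\<forall>x\<in>{0..1}. V x \<ge> 0)"
proof -
  have ev: "eventually (\<lambda>\<kappa>. scaled_log \<kappa> (measure (\<pi> \<kappa>) {0..1}) = 0) (at_right 0)"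
    using eventually_at_right_less[of "0::real"]
  proof (rule eventually_mono)
    fix \<kappa> :: real assume "0 < \<kappa>"
    then have P: "prob01 (\<pi> \<kappa>)" by (rule \<pi>_prob)
    then interpret prob_space "\<pi> \<kappa>" by (rule p01_prob)
    have "measure (\<pi> \<kappa>) {0..1} = 1" using prob_space p01_space[OF P] by simp
    then show "scaled_log \<kappa> (measure (\<pi> \<kappa>) {0..1}) = 0" by (simp add: scaled_log_def)
  qed
  have Li: "Liminf (at_right 0) (\<lambda>\<kappa>. scaled_log \<kappa> (measure (\<pi> \<kappa>) {0..1})) = 0"
    using Liminf_eq[OF ev] Liminf_const[of "at_right (0::real)" "0::ereal"] by simp
  have Ls: "Limsup (at_right 0) (\<lambda>\<kappa>. scaled_log \<kappa> (measure (\<pi> \<kappa>) {0..1})) = 0"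
    using Limsup_eq[OF ev] Limsup_const[of "at_right (0::real)" "0::ereal"] by simp
  have T: "topspace (top_of_set {0..1::real}) = {0..1}" by simp
  have i1: "(top_of_set {0..1}) interior_of {0..1::real} = {0..1}"
    using interior_of_topspace[of "top_of_set {0..1::real}"] by simp
  have c1: "(top_of_set {0..1}) closure_of {0..1::real} = {0..1}"
    using closure_of_topspace[of "top_of_set {0..1::real}"] by simp
  have "- (INF x\<in>{0..1}. ereal (V x)) \<le> 0" using LDP_lower[of "{0..1}"] i1 Li by simp
  moreover have "0 \<le> - (INF x\<in>{0..1}. ereal (V x))" using LDP_upper[of "{0..1}"] c1 Ls by simp
  ultimately have I0: "(INF x\<in>{0..1}. ereal (V x)) = 0"
    by (metis antisym ereal_uminus_le_0_iff ereal_0_le_uminus_iff)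
  obtain x0 where x0: "x0 \<in> {0..1}" "\<And>y. y \<in> {0..1} \<Longrightarrow> V x0 \<le> V y"
    using continuous_attains_inf[OF compact_Icc _ V_cont] by fastforce
  have "(INF x\<in>{0..1}. ereal (V x)) = ereal (V x0)"
    using x0 by (intro antisym INF_lower INF_greatest) auto
  then have V0: "V x0 = 0" using I0 by simp
  have "(INF y\<in>{0..1}. V y) = V x0"
    using x0 by (intro antisym cINF_lower cINF_greatest bdd_belowI2[of _ "V x0"]) auto
  then show ?thesis using V0 x0 by auto
qed


lemma varadhan_ub:
  fixes V :: "real \<Rightarrow> real" and \<pi> :: "real \<Rightarrow> real measure"
  assumes V_cont: "continuous_on {0..1} V"
    and \<pi>_prob: "\<And>\<kappa>. \<kappa> > 0 \<Longrightarrow> prob01 (\<pi> \<kappa>)"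
    and LDP_upper: "\<And>E. E \<in> sets borel \<Longrightarrow> E \<subseteq> {0..1} \<Longrightarrow>
        Limsup (at_right 0) (\<lambda>\<kappa>. scaled_log \<kappa> (measure (\<pi> \<kappa>) E))
          \<le> - (INF x\<in>(top_of_set {0..1}) closure_of E. ereal (V x))"
    and \<delta>: "\<delta> > 0"
  shows "\<exists>N::nat. eventually (\<lambda>\<kappa>. (\<integral>x. exp (2 / \<kappa> * (V x - \<delta>)) \<partial>\<pi> \<kappa>) \<le> real N) (at_right 0)"
proof -
  define \<eta> where "\<eta> = \<delta> / 4"
  have \<eta>: "\<eta> > 0" using \<delta> by (simp add: \<eta>_def)
  obtain N :: nat where N1: "N \<ge> 1"
    and NV: "\<And>x y. x \<in> {0..1} \<Longrightarrow> y \<in> {0..1} \<Longrightarrow> \<bar>x - y\<bar> \<le> 1 / real N \<Longrightarrow> \<bar>V x - V y\<bar> < \<eta>"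
    using unif_cont[OF V_cont \<eta>] by blast
  have Npos: "real N > 0" using N1 by simp
  define J where "J i = {real i / N .. (real i + 1) / N}" for i :: nat
  define c where "c i = real i / N" for i :: nat
  have Jsub: "J i \<subseteq> {0..1}" if "i < N" for i
  proof -
    have "real i + 1 \<le> real N" using that by linarith
    then show ?thesis using Npos unfolding J_def by (auto simp: field_simps)
  qed
  have cin: "c i \<in> {0..1}" if "i < N" for i using that Npos by (auto simp: c_def field_simps)
  have Vnear: "\<bar>V x - V (c i)\<bar> < \<eta>" if "i < N" "x \<in> J i" for i x
  proof -
    have x1: "real i / N \<le> x" and x2: "x \<le> real i / N + 1 / N"
      using that(2) by (auto simp: J_def add_divide_distrib)
    have "1 / real N \<ge> 0" using Npos by simp
    then have "\<bar>x - c i\<bar> \<le> 1 / real N" using x1 x2 unfolding c_def by linarith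
    then show ?thesis using NV Jsub[OF that(1)] that cin[OF that(1)] by blast
  qed
  have Jborel: "J i \<in> sets borel" for i unfolding J_def by simp
  have evi: "eventually (\<lambda>\<kappa>. scaled_log \<kappa> (measure (\<pi> \<kappa>) (J i)) < ereal (- V (c i) + 2 * \<eta>)) (at_right 0)"
    if i: "i < N" for i
  proof (rule Limsup_lessD)
    have cl: "top_of_set {0..1} closure_of J i = J i"
      unfolding closure_of_eq by (rule closed_subset[OF Jsub[OF i]]) (simp add: J_def)
    have "ereal (V (c i) - \<eta>) \<le> (INF x\<in>J i. ereal (V x))"
    proof (rule INF_greatest)
      fix x assume "x \<in> J i"
      then show "ereal (V (c i) - \<eta>) \<le> ereal (V x)" using Vnear[OF i] by fastforce
    qed
    then have "- (INF x\<in>J i. ereal (V x)) \<le> - ereal (V (c i) - \<eta>)"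
      by (simp only: ereal_minus_le_minus)
    also have "- ereal (V (c i) - \<eta>) = ereal (- V (c i) + \<eta>)" by simp
    also have "\<dots> < ereal (- V (c i) + 2 * \<eta>)" using \<eta> by simp
    finally show "Limsup (at_right 0) (\<lambda>\<kappa>. scaled_log \<kappa> (measure (\<pi> \<kappa>) (J i))) < ereal (- V (c i) + 2 * \<eta>)"
      using LDP_upper[OF Jborel Jsub[OF i]] cl by simp
  qed
  have ev: "eventually (\<lambda>\<kappa>. \<kappa> > 0 \<and> (\<forall>i\<in>{..<N}. scaled_log \<kappa> (measure (\<pi> \<kappa>) (J i)) < ereal (- V (c i) + 2 * \<eta>))) (at_right 0)"
    using eventually_at_right_less[of "0::real"] eventually_ball_finite[of "{..<N}", OF _ ballI[OF evi]]
    by (auto intro: eventually_conj)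
  show ?thesis
  proof (intro exI eventually_mono[OF ev], elim conjE)
    fix \<kappa> :: real
    assume k: "\<kappa> > 0" and sl: "\<forall>i\<in>{..<N}. scaled_log \<kappa> (measure (\<pi> \<kappa>) (J i)) < ereal (- V (c i) + 2 * \<eta>)"
    define P where "P = \<pi> \<kappa>"
    have P: "prob01 P" unfolding P_def by (rule \<pi>_prob[OF k])
    interpret prob_space P using P by (rule p01_prob)
    have JS: "J i \<in> sets P" if "i < N" for i using p01_sets[OF P Jborel Jsub[OF that]] .
    have mb: "measure P (J i) \<le> exp (2 / \<kappa> * (- V (c i) + 2 * \<eta>))" if i: "i < N" for i
    proof (cases "measure P (J i) = 0")
      case True then show ?thesis by simp
    next
      case False
      then have mpos: "measure P (J i) > 0" using measure_nonneg[of P "J i"] by linarith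
      have "scaled_log \<kappa> (measure P (J i)) < ereal (- V (c i) + 2 * \<eta>)"
        using sl i unfolding P_def by auto
      then have "ereal (\<kappa> / 2 * ln (measure P (J i))) < ereal (- V (c i) + 2 * \<eta>)"
        unfolding scaled_log_def if_not_P[OF False] .
      then have "\<kappa> / 2 * ln (measure P (J i)) < - V (c i) + 2 * \<eta>" by (simp only: less_ereal.simps)
      then have "ln (measure P (J i)) < 2 / \<kappa> * (- V (c i) + 2 * \<eta>)" using k by (simp add: field_simps)
      then have "exp (ln (measure P (J i))) < exp (2 / \<kappa> * (- V (c i) + 2 * \<eta>))" by simp
      then show ?thesis using mpos by simp
    qed
    define g where "g x = exp (2 / \<kappa> * (V x - \<delta>))" for x
    define C where "C i = exp (2 / \<kappa> * (V (c i) + \<eta> - \<delta>))" for i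
    have gc: "continuous_on {0..1} g" unfolding g_def by (intro continuous_intros V_cont)
    have gm: "g \<in> borel_measurable P" by (rule p01_cont_meas[OF P gc])
    have gint: "integrable P g" by (rule p01_cont_integrable[OF P gc])
    have gC: "g x \<le> C i" if "i < N" "x \<in> J i" for i x
    proof -
      have "V x - \<delta> \<le> V (c i) + \<eta> - \<delta>" using Vnear[OF that] by linarith
      then have "2 / \<kappa> * (V x - \<delta>) \<le> 2 / \<kappa> * (V (c i) + \<eta> - \<delta>)" using k
        by (intro mult_left_mono) auto
      then show ?thesis unfolding g_def C_def by simp
    qed
    have gJint: "integrable P (\<lambda>x. g x * indicator (J i) x)" if i: "i < N" for i
    proof (rule p01_integrable[OF P])
      show "(\<lambda>x. g x * indicator (J i) x) \<in> borel_measurable P"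
        using gm JS[OF i] by measurable
      fix x :: real assume "x \<in> {0..1}"
      show "\<bar>g x * indicator (J i) x\<bar> \<le> C i"
        using gC[OF i] by (auto simp: indicator_def g_def C_def)
    qed
    have CJint: "integrable P (\<lambda>x. C i * indicator (J i) x)" if i: "i < N" for i
      using JS[OF i] by (auto intro!: integrable_real_indicator simp: emeasure_finite less_top[symmetric])
    have "(\<integral>x. g x \<partial>P) \<le> (\<integral>x. (\<Sum>i<N. g x * indicator (J i) x) \<partial>P)"
    proof (rule integral_mono)
      show "integrable P g" by (rule gint)
      show "integrable P (\<lambda>x. \<Sum>i<N. g x * indicator (J i) x)"
        using gJint by (intro Bochner_Integration.integrable_sum) auto
      fix x assume "x \<in> space P"
      then have x: "x \<in> {0..1}" using p01_space[OF P] by simp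
      define i0 where "i0 = idx N x"
      have i0: "i0 < N" unfolding i0_def by (rule idx_lt[OF N1])
      have "x \<in> J i0" using idx_bounds[OF N1 x] unfolding J_def i0_def by auto
      then have "g x = g x * indicator (J i0) x" by simp
      also have "\<dots> \<le> (\<Sum>i<N. g x * indicator (J i) x)"
        by (rule member_le_sum) (auto simp: i0 g_def)
      finally show "g x \<le> (\<Sum>i<N. g x * indicator (J i) x)" .
    qed
    also have "\<dots> = (\<Sum>i<N. (\<integral>x. g x * indicator (J i) x \<partial>P))"
      using gJint by (intro Bochner_Integration.integral_sum) auto
    also have "\<dots> \<le> (\<Sum>i<N. (1::real))"
    proof (rule sum_mono)
      fix i assume "i \<in> {..<N}"
      then have i: "i < N" by simp
      have "(\<integral>x. g x * indicator (J i) x \<partial>P) \<le> (\<integral>x. C i * indicator (J i) x \<partial>P)"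
        using gJint[OF i] CJint[OF i] gC[OF i] by (intro integral_mono) (auto simp: indicator_def)
      also have "\<dots> = C i * measure P (J i)"
        using JS[OF i] by (simp add: Int_absorb2 sets.sets_into_space)
      also have "\<dots> \<le> C i * exp (2 / \<kappa> * (- V (c i) + 2 * \<eta>))"
        using mb[OF i] by (intro mult_left_mono) (auto simp: C_def)
      also have "\<dots> = exp (2 / \<kappa> * (3 * \<eta> - \<delta>))"
      proof -
        have "2 / \<kappa> * (V (c i) + \<eta> - \<delta>) + 2 / \<kappa> * (- V (c i) + 2 * \<eta>) = 2 / \<kappa> * (3 * \<eta> - \<delta>)"
          using k by (simp add: field_simps)
        then show ?thesis unfolding C_def exp_add[symmetric] by simp
      qed
      also have "\<dots> \<le> 1"
      proof -
        have "3 * \<eta> - \<delta> \<le> 0" unfolding \<eta>_def using \<delta> by simp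
        moreover have "2 / \<kappa> \<ge> 0" using k by simp
        ultimately have "2 / \<kappa> * (3 * \<eta> - \<delta>) \<le> 0" by (metis mult_nonneg_nonpos)
        then show ?thesis by simp
      qed
      finally show "(\<integral>x. g x * indicator (J i) x \<partial>P) \<le> 1" .
    qed
    also have "\<dots> = real N" by simp
    finally show "(\<integral>x. exp (2 / \<kappa> * (V x - \<delta>)) \<partial>\<pi> \<kappa>) \<le> real N"
      unfolding g_def P_def .
  qed
qed


lemma cont_bounded:
  fixes f :: "real \<Rightarrow> real"
  assumes "continuous_on {0..1} f"
  shows "\<exists>B. \<forall>x\<in>{0..1}. \<bar>f x\<bar> \<le> B"
  using compact_imp_bounded[OF compact_continuous_image[OF assms compact_Icc]]
  unfolding bounded_iff by fastforce

lemma part1: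
  fixes V :: "real \<Rightarrow> real" and \<pi> :: "real \<Rightarrow> real measure"
  assumes V_cont: "continuous_on {0..1} V"
    and \<pi>_prob: "\<And>\<kappa>. \<kappa> > 0 \<Longrightarrow> prob01 (\<pi> \<kappa>)"
    and LDP_upper: "\<And>E. E \<in> sets borel \<Longrightarrow> E \<subseteq> {0..1} \<Longrightarrow>
        Limsup (at_right 0) (\<lambda>\<kappa>. scaled_log \<kappa> (measure (\<pi> \<kappa>) E))
          \<le> - (INF x\<in>(top_of_set {0..1}) closure_of E. ereal (V x))"
    and Vinf: "(INF y\<in>{0..1}. V y) = 0"
    and qs: "\<forall>\<kappa>>0. prob01 (qs \<kappa>)" and q: "prob01 q" and wc: "weak_star_conv qs q"
  shows "ereal (pot_energy V q) \<le> Liminf (at_right 0) (\<lambda>\<kappa>. free_energy \<kappa> (\<pi> \<kappa>) (qs \<kappa>))"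
proof -
  define L where "L = (\<integral>x. V x \<partial>q)"
  have pe: "pot_energy V q = L" unfolding pot_energy_def L_def Vinf by simp
  have VT: "((\<lambda>\<kappa>. \<integral>x. V x \<partial>qs \<kappa>) \<longlongrightarrow> L) (at_right 0)"
    using wc V_cont unfolding weak_star_conv_def L_def by blast
  show ?thesis unfolding pe le_Liminf_iff
  proof (intro allI impI)
    fix y assume "y < ereal L"
    then obtain r where r: "y < ereal r" "ereal r < ereal L" using ereal_dense2 by blast
    define \<delta> where "\<delta> = (L - r) / 3"
    have \<delta>: "\<delta> > 0" using r(2) by (simp add: \<delta>_def)
    have rL: "r = L - 3 * \<delta>" by (simp add: \<delta>_def field_simps)
    obtain N :: nat where evN: "eventually (\<lambda>\<kappa>. (\<integral>x. exp (2 / \<kappa> * (V x - \<delta>)) \<partial>\<pi> \<kappa>) \<le> real N) (at_right 0)"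
      using varadhan_ub[OF V_cont \<pi>_prob LDP_upper \<delta>] by blast
    have evV: "eventually (\<lambda>\<kappa>. L - \<delta> < (\<integral>x. V x \<partial>qs \<kappa>)) (at_right 0)"
      using order_tendstoD(1)[OF VT] \<delta> by simp
    have kT: "((\<lambda>\<kappa>::real. \<kappa> * real N / 2) \<longlongrightarrow> 0) (at_right 0)"
    proof -
      have "((\<lambda>\<kappa>::real. \<kappa> * (real N / 2)) \<longlongrightarrow> 0 * (real N / 2)) (at_right 0)"
        by (intro tendsto_mult tendsto_ident_at tendsto_const)
      then show ?thesis by simp
    qed
    have evk: "eventually (\<lambda>\<kappa>. \<kappa> * real N / 2 < \<delta>) (at_right 0)"
      using order_tendstoD(2)[OF kT \<delta>] .
    have "eventually (\<lambda>\<kappa>. ereal r \<le> free_energy \<kappa> (\<pi> \<kappa>) (qs \<kappa>)) (at_right 0)"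
      using evN evV evk eventually_at_right_less[of "0::real"]
    proof (eventually_elim)
      case (elim \<kappa>)
      then have k: "\<kappa> > 0" and XN: "(\<integral>x. exp (2 / \<kappa> * (V x - \<delta>)) \<partial>\<pi> \<kappa>) \<le> real N"
        and VQ: "L - \<delta> < (\<integral>x. V x \<partial>qs \<kappa>)" and kN: "\<kappa> * real N / 2 < \<delta>" by auto
      define P where "P = \<pi> \<kappa>"
      define Q where "Q = qs \<kappa>"
      have P: "prob01 P" unfolding P_def using \<pi>_prob k by blast
      have Q: "prob01 Q" unfolding Q_def using qs k by blast
      interpret Qp: prob_space Q using Q by (rule p01_prob)
      define f where "f = (\<lambda>x. enn2real (RN_deriv P Q x))"
      show ?case
      proof (cases "absolutely_continuous P Q \<and> integrable P (\<lambda>x. f x * ln (f x))")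
        case False
        then have "free_energy \<kappa> P Q = \<infinity>" unfolding free_energy_def Let_def f_def by auto
        then show ?thesis unfolding P_def Q_def by simp
      next
        case True
        then have ac: "absolutely_continuous P Q" and fi: "integrable P (\<lambda>x. f x * ln (f x))" by auto
        have FE: "free_energy \<kappa> P Q = ereal (\<kappa> / 2 * (\<integral>x. f x * ln (f x) \<partial>P))"
          using True unfolding free_energy_def Let_def f_def by auto
        define \<phi> where "\<phi> x = 2 / \<kappa> * (V x - \<delta>)" for x
        have \<phi>c: "continuous_on {0..1} \<phi>" unfolding \<phi>_def by (intro continuous_intros V_cont)
        obtain B where B: "\<And>x. x \<in> {0..1} \<Longrightarrow> \<bar>\<phi> x\<bar> \<le> B" using cont_bounded[OF \<phi>c] by blast
        have EL: "(\<integral>x. \<phi> x \<partial>Q) + 1 - (\<integral>x. exp (\<phi> x) \<partial>P) \<le> (\<integral>x. f x * ln (f x) \<partial>P)"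
          using entropy_lower[OF P Q ac fi[unfolded f_def] p01_cont_meas[OF P \<phi>c] B] unfolding f_def .
        have iV: "integrable Q V" by (rule p01_cont_integrable[OF Q V_cont])
        have Iphi: "(\<integral>x. \<phi> x \<partial>Q) = 2 / \<kappa> * ((\<integral>x. V x \<partial>Q) - \<delta>)"
          unfolding \<phi>_def using iV Qp.prob_space by simp
        have X: "(\<integral>x. exp (\<phi> x) \<partial>P) \<le> real N" using XN unfolding \<phi>_def P_def .
        have "\<kappa> / 2 * (\<integral>x. f x * ln (f x) \<partial>P) \<ge> \<kappa> / 2 * (2 / \<kappa> * ((\<integral>x. V x \<partial>Q) - \<delta>) + 1 - real N)"
          using EL Iphi X k by (intro mult_left_mono) auto
        moreover have "\<kappa> / 2 * (2 / \<kappa> * ((\<integral>x. V x \<partial>Q) - \<delta>) + 1 - real N)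
            = ((\<integral>x. V x \<partial>Q) - \<delta>) + \<kappa> / 2 - \<kappa> * real N / 2"
          using k by (simp add: field_simps)
        ultimately have "\<kappa> / 2 * (\<integral>x. f x * ln (f x) \<partial>P) \<ge> r"
          using VQ kN k rL unfolding Q_def by linarith
        then show ?thesis using FE unfolding P_def Q_def by simp
      qed
    qed
    then show "eventually (\<lambda>\<kappa>. y < free_energy \<kappa> (\<pi> \<kappa>) (qs \<kappa>)) (at_right 0)"
      by (rule eventually_mono) (use r(1) in auto)
  qed
qed


lemma step_meas: "prob01 M \<Longrightarrow> (\<lambda>x. h (idx n x)) \<in> borel_measurable M"
proof -
  assume M: "prob01 M"
  have "(\<lambda>x. h (idx n x)) \<in> borel_measurable borel"
    by (rule measurable_compose[OF idx_meas]) simp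
  then have "(\<lambda>x. h (idx n x)) \<in> borel_measurable (restrict_space borel {0..1})"
    by (rule measurable_restrict_space1)
  then show ?thesis by (rule p01_meas[OF M])
qed

lemma sum_piece: assumes q: "prob01 q" and n: "n \<ge> 1" shows "(\<Sum>i<n. measure q (piece n i)) = 1"
proof -
  interpret prob_space q using q by (rule p01_prob)
  have "(\<integral>x. (\<lambda>_. 1::real) (idx n x) \<partial>q) = (\<Sum>i<n. 1 * measure q (piece n i))"
    using step_integral[OF q n, of "\<lambda>_. 1"] by blast
  moreover have "(\<integral>x. (\<lambda>_. 1::real) (idx n x) \<partial>q) = 1" using prob_space by simp
  ultimately show ?thesis by simp
qed

lemma Q_props:
  fixes q P :: "real measure"
  assumes P: "prob01 P" and q: "prob01 q" and n: "n \<ge> 1"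
    and pos: "\<And>i. i < n \<Longrightarrow> measure P (piece n i) > 0"
  defines "c \<equiv> \<lambda>i. measure q (piece n i) / measure P (piece n i)"
  defines "Q \<equiv> density P (\<lambda>x. ennreal (c (idx n x)))"
  shows "prob01 Q"
    and "\<And>h::nat\<Rightarrow>real. (\<integral>x. h (idx n x) \<partial>Q) = (\<integral>x. h (idx n x) \<partial>q)"
    and "\<And>\<kappa>. \<kappa> > 0 \<Longrightarrow> free_energy \<kappa> P Q \<le> ereal (\<kappa> / 2 * (\<Sum>i<n. measure q (piece n i) * (- ln (measure P (piece n i)))))"
proof -
  interpret Pp: prob_space P using P by (rule p01_prob)
  interpret qp: prob_space q using q by (rule p01_prob)
  have c0: "c i \<ge> 0" for i unfolding c_def by simp
  have cq: "c i * measure P (piece n i) = measure q (piece n i)" if "i < n" for i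
    using pos[OF that] unfolding c_def by simp
  have cm: "(\<lambda>x. c (idx n x)) \<in> borel_measurable P" by (rule step_meas[OF P])
  have cme: "(\<lambda>x. ennreal (c (idx n x))) \<in> borel_measurable P"
    using measurable_compose[OF cm measurable_ennreal] by (simp add: comp_def)
  have hint: "(\<integral>x. h (idx n x) \<partial>Q) = (\<integral>x. h (idx n x) \<partial>q)" for h :: "nat \<Rightarrow> real"
  proof -
    have "(\<integral>x. h (idx n x) \<partial>Q) = (\<integral>x. c (idx n x) *\<^sub>R h (idx n x) \<partial>P)"
      unfolding Q_def by (rule integral_density) (auto simp: cm c0 step_meas[OF P])
    also have "\<dots> = (\<integral>x. (\<lambda>i. c i * h i) (idx n x) \<partial>P)" by simp
    also have "\<dots> = (\<Sum>i<n. (c i * h i) * measure P (piece n i))"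
      by (rule step_integral[OF P n, of "\<lambda>i. c i * h i", THEN conjunct2])
    also have "\<dots> = (\<Sum>i<n. h i * measure q (piece n i))"
    proof (intro sum.cong refl)
      fix i assume "i \<in> {..<n}"
      then have "c i * measure P (piece n i) = measure q (piece n i)" using cq by simp
      then show "c i * h i * measure P (piece n i) = h i * measure q (piece n i)"
        by (metis mult.commute mult.left_commute)
    qed
    also have "\<dots> = (\<integral>x. h (idx n x) \<partial>q)"
      by (rule step_integral[OF q n, of h, THEN conjunct2, symmetric])
    finally show ?thesis .
  qed
  then show "\<And>h::nat\<Rightarrow>real. (\<integral>x. h (idx n x) \<partial>Q) = (\<integral>x. h (idx n x) \<partial>q)" .
  have sQ: "sets Q = sets P" unfolding Q_def by simp
  have "emeasure Q (space Q) = 1"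
  proof -
    have spQ: "space Q = space P" unfolding Q_def by simp
    have "emeasure Q (space Q) = emeasure (density P (\<lambda>x. ennreal (c (idx n x)))) (space P)"
      using spQ unfolding Q_def by simp
    also have "\<dots> = (\<integral>\<^sup>+ x. ennreal (c (idx n x)) * indicator (space P) x \<partial>P)"
      by (rule emeasure_density) (auto simp: cm cme)
    also have "\<dots> = (\<integral>\<^sup>+ x. ennreal (c (idx n x)) \<partial>P)"
      by (intro nn_integral_cong) auto
    also have "\<dots> = ennreal (\<integral>x. c (idx n x) \<partial>P)"
      using step_integral[OF P n, of c, THEN conjunct1] c0 by (intro nn_integral_eq_integral) auto
    also have "(\<integral>x. c (idx n x) \<partial>P) = (\<Sum>i<n. c i * measure P (piece n i))"
      by (rule step_integral[OF P n, of c, THEN conjunct2])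
    also have "\<dots> = (\<Sum>i<n. measure q (piece n i))" by (intro sum.cong refl) (simp add: cq)
    also have "\<dots> = 1" by (rule sum_piece[OF q n])
    finally show ?thesis by simp
  qed
  then have "prob_space Q" by (rule prob_spaceI)
  then show "prob01 Q" using sQ P unfolding prob01_def by simp
  fix \<kappa> :: real assume k: "\<kappa> > 0"
  have ac: "absolutely_continuous P Q" unfolding Q_def by (rule absolutely_continuousI_density) (rule cme)
  have AE1: "AE x in P. ennreal (c (idx n x)) = RN_deriv P Q x"
    by (rule Pp.RN_deriv_unique) (auto simp: cm cme Q_def)
  define f where "f = (\<lambda>x. enn2real (RN_deriv P Q x))"
  have AE2: "AE x in P. f x * ln (f x) = (\<lambda>i. c i * ln (c i)) (idx n x)"
    using AE1 proof eventually_elim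
    case (elim x)
    then have "f x = c (idx n x)" unfolding f_def using c0 by (metis enn2real_ennreal)
    then show ?case by simp
  qed
  have fm: "(\<lambda>x. f x * ln (f x)) \<in> borel_measurable P" unfolding f_def by measurable
  have int: "integrable P (\<lambda>x. f x * ln (f x))"
    using integrable_cong_AE[OF fm step_meas[OF P] AE2] step_integral[OF P n, of "\<lambda>i. c i * ln (c i)", THEN conjunct1] by simp
  have I: "(\<integral>x. f x * ln (f x) \<partial>P) = (\<Sum>i<n. (c i * ln (c i)) * measure P (piece n i))"
    using integral_cong_AE[OF fm step_meas[OF P] AE2] step_integral[OF P n, of "\<lambda>i. c i * ln (c i)", THEN conjunct2] by simp
  have FE: "free_energy \<kappa> P Q = ereal (\<kappa> / 2 * (\<Sum>i<n. (c i * ln (c i)) * measure P (piece n i)))"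
  proof -
    have int': "integrable P (\<lambda>x. enn2real (RN_deriv P Q x) * ln (enn2real (RN_deriv P Q x)))"
      using int unfolding f_def .
    have "free_energy \<kappa> P Q = ereal (\<kappa> / 2 * (\<integral>x. f x * ln (f x) \<partial>P))"
      unfolding free_energy_def Let_def f_def by (simp only: ac int' if_True)
    then show ?thesis using I by simp
  qed
  have le: "(c i * ln (c i)) * measure P (piece n i) \<le> measure q (piece n i) * (- ln (measure P (piece n i)))"
    if i: "i < n" for i
  proof (cases "measure q (piece n i) = 0")
    case True then show ?thesis by (simp add: c_def)
  next
    case False
    then have qpos: "measure q (piece n i) > 0" using measure_nonneg[of q] by (metis order_le_less)
    have eq: "(c i * ln (c i)) * measure P (piece n i) = measure q (piece n i) * ln (c i)"
      using cq[OF i] by (simp add: mult_ac)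
    have "ln (c i) = ln (measure q (piece n i)) - ln (measure P (piece n i))"
      unfolding c_def using qpos pos[OF i] by (simp add: ln_div)
    moreover have "ln (measure q (piece n i)) \<le> 0" using qpos qp.prob_le_1 by simp
    ultimately have "ln (c i) \<le> - ln (measure P (piece n i))" by simp
    then show ?thesis unfolding eq using qpos by (intro mult_left_mono) auto
  qed
  have "(\<Sum>i<n. (c i * ln (c i)) * measure P (piece n i)) \<le> (\<Sum>i<n. measure q (piece n i) * (- ln (measure P (piece n i))))"
    using le by (intro sum_mono) auto
  then have "\<kappa> / 2 * (\<Sum>i<n. (c i * ln (c i)) * measure P (piece n i)) \<le> \<kappa> / 2 * (\<Sum>i<n. measure q (piece n i) * (- ln (measure P (piece n i))))"
    using k by (intro mult_left_mono) auto
  then show "free_energy \<kappa> P Q \<le> ereal (\<kappa> / 2 * (\<Sum>i<n. measure q (piece n i) * (- ln (measure P (piece n i)))))"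
    unfolding FE by simp
qed


lemma recov_n:
  fixes V :: "real \<Rightarrow> real" and \<pi> :: "real \<Rightarrow> real measure"
  assumes V_cont: "continuous_on {0..1} V"
    and \<pi>_prob: "\<And>\<kappa>. \<kappa> > 0 \<Longrightarrow> prob01 (\<pi> \<kappa>)"
    and LDP_lower: "\<And>E. E \<in> sets borel \<Longrightarrow> E \<subseteq> {0..1} \<Longrightarrow>
        - (INF x\<in>(top_of_set {0..1}) interior_of E. ereal (V x))
          \<le> Liminf (at_right 0) (\<lambda>\<kappa>. scaled_log \<kappa> (measure (\<pi> \<kappa>) E))"
    and q: "prob01 q" and n: "n \<ge> 1"
  shows "eventually (\<lambda>\<kappa>. \<kappa> > 0 \<and> (\<forall>i<n. measure (\<pi> \<kappa>) (piece n i) > 0) \<and>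
        \<kappa> / 2 * (\<Sum>i<n. measure q (piece n i) * (- ln (measure (\<pi> \<kappa>) (piece n i))))
          \<le> (\<integral>x. V x \<partial>q) + 1 / real n) (at_right 0)"
proof -
  interpret qp: prob_space q using q by (rule p01_prob)
  obtain B where B: "\<And>x. x \<in> {0..1} \<Longrightarrow> \<bar>V x\<bar> \<le> B" using cont_bounded[OF V_cont] by blast
  have np: "real n > 0" using n by simp
  define Oi where "Oi i = {real i / n <..< (real i + 1) / n}" for i :: nat
  define s where "s i = (INF x\<in>Oi i. V x)" for i
  have O01: "Oi i \<subseteq> {0..1}" if "i < n" for i
  proof -
    have "real i + 1 \<le> real n" using that by linarith
    then have "(real i + 1) / n \<le> 1" using np by simp
    moreover have "real i / n \<ge> 0" by simp
    ultimately show ?thesis unfolding Oi_def by (auto; linarith)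
  qed
  have Opiece: "Oi i \<subseteq> piece n i" if "i < n" for i
    using idx_open[OF n that] O01[OF that] unfolding Oi_def piece_def by auto
  have ab: "real i / n < (real i + 1) / n" for i using np by (simp add: divide_strict_right_mono)
  have One: "Oi i \<noteq> {}" for i unfolding Oi_def using ab[of i] by (simp add: not_le)
  have bdd: "bdd_below (V ` Oi i)" if "i < n" for i
    using B O01[OF that] by (intro bdd_belowI2[of _ "-B"]) (fastforce simp: abs_le_iff)
  have sO: "s i \<le> V y" if "i < n" "y \<in> Oi i" for i y
    unfolding s_def using bdd[OF that(1)] that(2) by (rule cINF_lower)
  have sle: "s i \<le> V x" if i: "i < n" and x: "x \<in> piece n i" for i x
  proof -
    have cl: "closure (Oi i) = {real i / n .. (real i + 1) / n}" unfolding Oi_def using ab by simp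
    have "closure (Oi i) \<subseteq> {0..1}"
      using closure_mono[OF O01[OF i]] by simp
    then have c1: "continuous_on (closure (Oi i)) V" using V_cont continuous_on_subset by blast
    have "x \<in> {0..1}" "idx n x = i" using x unfolding piece_def by auto
    then have c2: "x \<in> closure (Oi i)" unfolding cl using idx_bounds[OF n, of x] by auto
    show ?thesis using continuous_ge_on_closure[OF c1 c2, of "s i"] sO[OF i] by blast
  qed
  have evi: "eventually (\<lambda>\<kappa>. ereal (- s i - 1 / n) < scaled_log \<kappa> (measure (\<pi> \<kappa>) (piece n i))) (at_right 0)"
    if i: "i < n" for i
  proof (rule less_LiminfD)
    have "s i < s i + 1 / (2 * n)" using np by simp
    then obtain y where y: "y \<in> Oi i" "V y < s i + 1 / (2 * n)"
      using cINF_less_iff[OF One bdd[OF i]] unfolding s_def by blast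
    have "y \<in> (top_of_set {0..1}) interior_of piece n i"
      using interior_of_maximal[OF Opiece[OF i] open_subset[OF O01[OF i]]] y(1) by (auto simp: Oi_def)
    then have "(INF x\<in>(top_of_set {0..1}) interior_of piece n i. ereal (V x)) \<le> ereal (V y)"
      by (rule INF_lower)
    then have "- ereal (V y) \<le> - (INF x\<in>(top_of_set {0..1}) interior_of piece n i. ereal (V x))"
      by (simp only: ereal_minus_le_minus)
    moreover have "ereal (- s i - 1 / n) < - ereal (V y)"
    proof -
      have "1 / (2 * real n) < 1 / real n" using np by (simp add: field_simps)
      then have "- s i - 1 / n < - V y" using y(2) by linarith
      then show ?thesis by simp
    qed
    ultimately show "ereal (- s i - 1 / n) < Liminf (at_right 0) (\<lambda>\<kappa>. scaled_log \<kappa> (measure (\<pi> \<kappa>) (piece n i)))"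
      using LDP_lower[OF piece_borel piece_sub] by (meson less_le_trans order_trans)
  qed
  have ev: "eventually (\<lambda>\<kappa>. \<kappa> > 0 \<and> (\<forall>i\<in>{..<n}. ereal (- s i - 1 / n) < scaled_log \<kappa> (measure (\<pi> \<kappa>) (piece n i)))) (at_right 0)"
    using eventually_at_right_less[of "0::real"] eventually_ball_finite[of "{..<n}", OF _ ballI[OF evi]]
    by (auto intro: eventually_conj)
  show ?thesis
  proof (rule eventually_mono[OF ev], elim conjE, intro conjI allI impI)
    fix \<kappa> :: real
    assume k: "\<kappa> > 0" and sl: "\<forall>i\<in>{..<n}. ereal (- s i - 1 / n) < scaled_log \<kappa> (measure (\<pi> \<kappa>) (piece n i))"
    show "\<kappa> > 0" by (rule k)
    have mpos: "measure (\<pi> \<kappa>) (piece n i) > 0" and lnb: "- (\<kappa> / 2 * ln (measure (\<pi> \<kappa>) (piece n i))) < s i + 1 / n"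
      if i: "i < n" for i
    proof -
      have lt: "ereal (- s i - 1 / n) < scaled_log \<kappa> (measure (\<pi> \<kappa>) (piece n i))" using sl i by auto
      have ne: "measure (\<pi> \<kappa>) (piece n i) \<noteq> 0"
      proof
        assume "measure (\<pi> \<kappa>) (piece n i) = 0"
        then show False using lt unfolding scaled_log_def by simp
      qed
      then show "measure (\<pi> \<kappa>) (piece n i) > 0" using measure_nonneg[of "\<pi> \<kappa>" "piece n i"] by linarith
      have "ereal (- s i - 1 / n) < ereal (\<kappa> / 2 * ln (measure (\<pi> \<kappa>) (piece n i)))"
        using lt unfolding scaled_log_def if_not_P[OF ne] .
      then have "- s i - 1 / n < \<kappa> / 2 * ln (measure (\<pi> \<kappa>) (piece n i))" by (simp only: less_ereal.simps)
      then show "- (\<kappa> / 2 * ln (measure (\<pi> \<kappa>) (piece n i))) < s i + 1 / n" by linarith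
    qed
    then show "\<And>i. i < n \<Longrightarrow> measure (\<pi> \<kappa>) (piece n i) > 0" by blast
    define qi where "qi i = measure q (piece n i)" for i
    have "\<kappa> / 2 * (\<Sum>i<n. qi i * (- ln (measure (\<pi> \<kappa>) (piece n i))))
          = (\<Sum>i<n. qi i * (- (\<kappa> / 2 * ln (measure (\<pi> \<kappa>) (piece n i)))))"
      by (simp add: sum_distrib_left mult_ac)
    also have "\<dots> \<le> (\<Sum>i<n. qi i * (s i + 1 / n))"
      using lnb by (intro sum_mono mult_left_mono) (auto simp: qi_def less_imp_le)
    also have "\<dots> = (\<Sum>i<n. s i * qi i) + (\<Sum>i<n. qi i) / n"
      by (simp add: algebra_simps sum.distrib sum_divide_distrib)
    also have "(\<Sum>i<n. qi i) = 1" unfolding qi_def by (rule sum_piece[OF q n])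
    also have "(\<Sum>i<n. s i * qi i) = (\<integral>x. s (idx n x) \<partial>q)"
      unfolding qi_def by (rule step_integral[OF q n, of s, THEN conjunct2, symmetric])
    also have "(\<integral>x. s (idx n x) \<partial>q) \<le> (\<integral>x. V x \<partial>q)"
    proof (rule integral_mono)
      show "integrable q (\<lambda>x. s (idx n x))" by (rule step_integral[OF q n, of s, THEN conjunct1])
      show "integrable q V" by (rule p01_cont_integrable[OF q V_cont])
      fix x assume "x \<in> space q"
      then have x: "x \<in> {0..1}" using p01_space[OF q] by simp
      show "s (idx n x) \<le> V x"
        using sle[OF idx_lt[OF n]] x unfolding piece_def by blast
    qed
    finally show "\<kappa> / 2 * (\<Sum>i<n. measure q (piece n i) * (- ln (measure (\<pi> \<kappa>) (piece n i))))
          \<le> (\<integral>x. V x \<partial>q) + 1 / real n" unfolding qi_def by simp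
  qed
qed


lemma int_close:
  fixes f g :: "real \<Rightarrow> real"
  assumes M: "prob01 M" and fi: "integrable M f" and gi: "integrable M g"
    and b: "\<And>x. x \<in> {0..1} \<Longrightarrow> \<bar>f x - g x\<bar> \<le> a"
  shows "\<bar>(\<integral>x. f x \<partial>M) - (\<integral>x. g x \<partial>M)\<bar> \<le> a"
proof -
  interpret prob_space M using M by (rule p01_prob)
  have sp: "space M = {0..1}" by (rule p01_space[OF M])
  have "(\<integral>x. f x - g x \<partial>M) \<le> (\<integral>x. a \<partial>M)"
    using fi gi b by (intro integral_mono) (auto simp: sp abs_le_iff)
  moreover have "(\<integral>x. g x - f x \<partial>M) \<le> (\<integral>x. a \<partial>M)"
    using fi gi b by (intro integral_mono) (auto simp: sp abs_le_iff)
  moreover have "(\<integral>x. a \<partial>M) = a" using prob_space by simp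
  ultimately show ?thesis using fi gi prob_space by (simp add: abs_le_iff)
qed

lemma part2:
  fixes V :: "real \<Rightarrow> real" and \<pi> :: "real \<Rightarrow> real measure"
  assumes V_cont: "continuous_on {0..1} V"
    and \<pi>_prob: "\<And>\<kappa>. \<kappa> > 0 \<Longrightarrow> prob01 (\<pi> \<kappa>)"
    and LDP_lower: "\<And>E. E \<in> sets borel \<Longrightarrow> E \<subseteq> {0..1} \<Longrightarrow>
        - (INF x\<in>(top_of_set {0..1}) interior_of E. ereal (V x))
          \<le> Liminf (at_right 0) (\<lambda>\<kappa>. scaled_log \<kappa> (measure (\<pi> \<kappa>) E))"
    and Vinf: "(INF y\<in>{0..1}. V y) = 0"
    and q: "prob01 q"
  shows "\<exists>qs. (\<forall>\<kappa>>0. prob01 (qs \<kappa>)) \<and> weak_star_conv qs q \<and>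
               Limsup (at_right 0) (\<lambda>\<kappa>. free_energy \<kappa> (\<pi> \<kappa>) (qs \<kappa>)) \<le> ereal (pot_energy V q)"
proof -
  define L where "L = (\<integral>x. V x \<partial>q)"
  have pe: "pot_energy V q = L" unfolding pot_energy_def L_def Vinf by simp
  define R where "R m \<kappa> \<longleftrightarrow> \<kappa> > 0 \<and> (\<forall>i<m. measure (\<pi> \<kappa>) (piece m i) > 0) \<and>
        \<kappa> / 2 * (\<Sum>i<m. measure q (piece m i) * (- ln (measure (\<pi> \<kappa>) (piece m i)))) \<le> L + 1 / real m"
    for m \<kappa>
  have "\<forall>n. \<exists>d>0. \<forall>\<kappa>>0. \<kappa> < d \<longrightarrow> R (Suc n) \<kappa>"
  proof
    fix n
    have "eventually (R (Suc n)) (at_right 0)"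
      using recov_n[OF V_cont \<pi>_prob LDP_lower q, of "Suc n"] unfolding R_def L_def by simp
    then show "\<exists>d>0. \<forall>\<kappa>>0. \<kappa> < d \<longrightarrow> R (Suc n) \<kappa>" unfolding eventually_at_right_field by simp
  qed
  then obtain \<delta> where \<delta>pos: "\<And>n. \<delta> n > 0" and \<delta>R: "\<And>n \<kappa>. \<kappa> > 0 \<Longrightarrow> \<kappa> < \<delta> n \<Longrightarrow> R (Suc n) \<kappa>"
    by metis
  define e where "e n = min (1 / real (Suc n)) (Min (\<delta> ` {..n}))" for n
  have epos: "e n > 0" for n unfolding e_def using \<delta>pos by (simp add: Min_gr_iff)
  have emono: "e n \<le> e m" if "m \<le> n" for m n
  proof -
    have "Min (\<delta> ` {..n}) \<le> Min (\<delta> ` {..m})" using that by (intro Min_antimono) auto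
    moreover have "1 / real (Suc n) \<le> 1 / real (Suc m)" using that by (simp add: frac_le)
    ultimately show ?thesis unfolding e_def by linarith
  qed
  have e\<delta>: "e n \<le> \<delta> n" for n
  proof -
    have "Min (\<delta> ` {..n}) \<le> \<delta> n" by (intro Min_le) auto
    then show ?thesis unfolding e_def by linarith
  qed
  have einv: "e n \<le> 1 / real (Suc n)" for n unfolding e_def by linarith
  define M where "M \<kappa> = (GREATEST m. \<kappa> < e m)" for \<kappa>
  have Mprop: "\<kappa> < e (M \<kappa>) \<and> (\<forall>N. \<kappa> < e N \<longrightarrow> N \<le> M \<kappa>)" if k: "0 < \<kappa>" "\<kappa> < e 0" for \<kappa>
  proof -
    have bound: "y \<le> nat \<lceil>1 / \<kappa>\<rceil>" if "\<kappa> < e y" for y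
    proof -
      have "\<kappa> < 1 / real (Suc y)" using that einv[of y] by linarith
      then have "\<kappa> * real (Suc y) < 1" using k by (simp add: field_simps)
      then have "real (Suc y) < 1 / \<kappa>" using k by (simp add: field_simps)
      then have "real y < 1 / \<kappa>" by simp
      then show ?thesis by linarith
    qed
    show ?thesis unfolding M_def
      using GreatestI_nat[of "\<lambda>m. \<kappa> < e m" 0, OF k(2) bound] Greatest_le_nat[of "\<lambda>m. \<kappa> < e m", OF _ bound]
      by blast
  qed
  have good: "R (Suc (M \<kappa>)) \<kappa>" if k: "0 < \<kappa>" "\<kappa> < e 0" for \<kappa>
    using \<delta>R[OF k(1)] Mprop[OF k] e\<delta>[of "M \<kappa>"] by fastforce
  define Qd where "Qd m \<kappa> = density (\<pi> \<kappa>) (\<lambda>x. ennreal (measure q (piece m (idx m x)) / measure (\<pi> \<kappa>) (piece m (idx m x))))" for m \<kappa>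
  define qs where "qs \<kappa> = (if 0 < \<kappa> \<and> \<kappa> < e 0 then Qd (Suc (M \<kappa>)) \<kappa> else q)" for \<kappa>
  have QP: "prob01 (qs \<kappa>) \<and> (\<forall>h::nat\<Rightarrow>real. (\<integral>x. h (idx (Suc (M \<kappa>)) x) \<partial>qs \<kappa>) = (\<integral>x. h (idx (Suc (M \<kappa>)) x) \<partial>q))
      \<and> free_energy \<kappa> (\<pi> \<kappa>) (qs \<kappa>) \<le> ereal (\<kappa> / 2 * (\<Sum>i<Suc (M \<kappa>). measure q (piece (Suc (M \<kappa>)) i) * (- ln (measure (\<pi> \<kappa>) (piece (Suc (M \<kappa>)) i)))))"
    if k: "0 < \<kappa>" "\<kappa> < e 0" for \<kappa>
  proof -
    have P: "prob01 (\<pi> \<kappa>)" using \<pi>_prob k by simp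
    have pos: "\<And>i. i < Suc (M \<kappa>) \<Longrightarrow> measure (\<pi> \<kappa>) (piece (Suc (M \<kappa>)) i) > 0"
      using good[OF k] unfolding R_def by blast
    have qsk: "qs \<kappa> = Qd (Suc (M \<kappa>)) \<kappa>" unfolding qs_def using k by simp
    note QQ = Q_props[OF P q _ pos]
    show ?thesis unfolding qsk Qd_def using QQ k by simp
  qed
  show ?thesis
  proof (intro exI[of _ qs] conjI allI impI)
    fix \<kappa> :: real assume k: "\<kappa> > 0"
    show "prob01 (qs \<kappa>)"
    proof (cases "\<kappa> < e 0")
      case True then show ?thesis using QP k by blast
    next
      case False then show ?thesis unfolding qs_def using q by simp
    qed
  next
    show "weak_star_conv qs q" unfolding weak_star_conv_def
    proof (intro allI impI tendstoI)
      fix \<phi> :: "real \<Rightarrow> real" and \<epsilon> :: real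
      assume \<phi>c: "continuous_on {0..1} \<phi>" and \<epsilon>: "\<epsilon> > 0"
      obtain N :: nat where N1: "N \<ge> 1"
        and NV: "\<And>x y. x \<in> {0..1} \<Longrightarrow> y \<in> {0..1} \<Longrightarrow> \<bar>x - y\<bar> \<le> 1 / real N \<Longrightarrow> \<bar>\<phi> x - \<phi> y\<bar> < \<epsilon> / 3"
        using unif_cont[OF \<phi>c, of "\<epsilon> / 3"] \<epsilon> by auto
      have "eventually (\<lambda>\<kappa>. \<kappa> < e N) (at_right (0::real))"
        unfolding eventually_at_right_field using epos[of N] by blast
      then show "eventually (\<lambda>\<kappa>. dist (\<integral>x. \<phi> x \<partial>qs \<kappa>) (\<integral>x. \<phi> x \<partial>q) < \<epsilon>) (at_right 0)"
        using eventually_at_right_less[of "0::real"]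
      proof eventually_elim
        case (elim \<kappa>)
        have k: "0 < \<kappa>" "\<kappa> < e 0" using elim emono[of 0 N] by auto
        define m where "m = Suc (M \<kappa>)"
        have "N \<le> M \<kappa>" using Mprop[OF k] elim by blast
        then have mN: "N < m" unfolding m_def by simp
        have m1: "m \<ge> 1" unfolding m_def by simp
        have mN': "1 / real m \<le> 1 / real N" using mN N1 by (simp add: frac_le)
        have Q: "prob01 (qs \<kappa>)" using QP[OF k] by blast
        define \<psi> where "\<psi> x = (\<lambda>i. \<phi> (real i / real m)) (idx m x)" for x
        have eqpsi: "(\<integral>x. \<psi> x \<partial>qs \<kappa>) = (\<integral>x. \<psi> x \<partial>q)"
        proof -
          have "\<forall>h::nat\<Rightarrow>real. (\<integral>x. h (idx m x) \<partial>qs \<kappa>) = (\<integral>x. h (idx m x) \<partial>q)"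
            using QP[OF k] unfolding m_def by blast
          then show ?thesis unfolding \<psi>_def by (rule spec)
        qed
        have close: "\<bar>\<phi> x - \<psi> x\<bar> \<le> \<epsilon> / 3" if x: "x \<in> {0..1}" for x
        proof -
          have b: "real (idx m x) / m \<le> x \<and> x \<le> (real (idx m x) + 1) / m" by (rule idx_bounds[OF m1 x])
          have "\<bar>x - real (idx m x) / m\<bar> \<le> 1 / real m"
            using b by (simp add: add_divide_distrib abs_le_iff)
          moreover have "real (idx m x) / m \<in> {0..1}" using idx_lt[OF m1, of x] by simp
          ultimately have "\<bar>\<phi> x - \<phi> (real (idx m x) / m)\<bar> < \<epsilon> / 3"
            using NV[OF x] mN' by (meson order_trans)
          then show ?thesis unfolding \<psi>_def by simp
        qed
        have \<psi>q: "integrable q \<psi>" unfolding \<psi>_def by (rule step_integral[OF q m1, THEN conjunct1])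
        have \<psi>Q: "integrable (qs \<kappa>) \<psi>" unfolding \<psi>_def by (rule step_integral[OF Q m1, THEN conjunct1])
        have a1: "\<bar>(\<integral>x. \<phi> x \<partial>qs \<kappa>) - (\<integral>x. \<psi> x \<partial>qs \<kappa>)\<bar> \<le> \<epsilon> / 3"
          by (rule int_close[OF Q p01_cont_integrable[OF Q \<phi>c] \<psi>Q close])
        have a2: "\<bar>(\<integral>x. \<phi> x \<partial>q) - (\<integral>x. \<psi> x \<partial>q)\<bar> \<le> \<epsilon> / 3"
          by (rule int_close[OF q p01_cont_integrable[OF q \<phi>c] \<psi>q close])
        show ?case using a1 a2 eqpsi \<epsilon> unfolding dist_real_def by linarith
      qed
    qed
  next
    show "Limsup (at_right 0) (\<lambda>\<kappa>. free_energy \<kappa> (\<pi> \<kappa>) (qs \<kappa>)) \<le> ereal (pot_energy V q)"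
      unfolding pe Limsup_le_iff
    proof (intro allI impI)
      fix y assume "y > ereal L"
      then obtain r where r: "ereal L < ereal r" "ereal r < y" using ereal_dense2 by blast
      then have rL: "r - L > 0" by simp
      obtain N :: nat where N: "N \<noteq> 0" "inverse (real N) < r - L" using real_arch_inverse rL by blast
      have "eventually (\<lambda>\<kappa>. \<kappa> < e N) (at_right (0::real))"
        unfolding eventually_at_right_field using epos[of N] by blast
      then show "eventually (\<lambda>\<kappa>. free_energy \<kappa> (\<pi> \<kappa>) (qs \<kappa>) < y) (at_right 0)"
        using eventually_at_right_less[of "0::real"]
      proof eventually_elim
        case (elim \<kappa>)
        have k: "0 < \<kappa>" "\<kappa> < e 0" using elim emono[of 0 N] by auto
        define m where "m = Suc (M \<kappa>)"
        have "N \<le> M \<kappa>" using Mprop[OF k] elim by blast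
        then have mN: "N < m" unfolding m_def by simp
        have "1 / real m \<le> 1 / real N" using mN N(1) by (simp add: frac_le)
        then have m_small: "1 / real m < r - L" using N(2) by (simp add: inverse_eq_divide)
        have "free_energy \<kappa> (\<pi> \<kappa>) (qs \<kappa>) \<le> ereal (\<kappa> / 2 * (\<Sum>i<m. measure q (piece m i) * (- ln (measure (\<pi> \<kappa>) (piece m i)))))"
          using QP[OF k] unfolding m_def by blast
        also have "\<dots> \<le> ereal (L + 1 / real m)"
          using good[OF k] unfolding R_def m_def by simp
        also have "\<dots> < ereal r" using m_small by simp
        also have "\<dots> < y" by (rule r(2))
        finally show ?case .
      qed
    qed
  qed
qed


theorem proposition3:
  fixes V :: "real \<Rightarrow> real" and \<pi> :: "real \<Rightarrow> real measure"
  assumes V_cont: "continuous_on {0..1} V"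
    and \<pi>_prob: "\<And>\<kappa>. \<kappa> > 0 \<Longrightarrow> prob01 (\<pi> \<kappa>)"
    and \<pi>_ac: "\<And>\<kappa>. \<kappa> > 0 \<Longrightarrow> absolutely_continuous (restrict_space lborel {0..1}) (\<pi> \<kappa>)"
    and LDP_lower: "\<And>E. E \<in> sets borel \<Longrightarrow> E \<subseteq> {0..1} \<Longrightarrow>
        - (INF x\<in>(top_of_set {0..1}) interior_of E. ereal (V x))
          \<le> Liminf (at_right 0) (\<lambda>\<kappa>. scaled_log \<kappa> (measure (\<pi> \<kappa>) E))"
    and LDP_upper: "\<And>E. E \<in> sets borel \<Longrightarrow> E \<subseteq> {0..1} \<Longrightarrow>
        Limsup (at_right 0) (\<lambda>\<kappa>. scaled_log \<kappa> (measure (\<pi> \<kappa>) E))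
          \<le> - (INF x\<in>(top_of_set {0..1}) closure_of E. ereal (V x))"
  shows "(\<forall>qs q. (\<forall>\<kappa>>0. prob01 (qs \<kappa>)) \<and> prob01 q \<and> weak_star_conv qs q \<longrightarrow>
            ereal (pot_energy V q) \<le> Liminf (at_right 0) (\<lambda>\<kappa>. free_energy \<kappa> (\<pi> \<kappa>) (qs \<kappa>)))
       \<and> (\<forall>q. prob01 q \<longrightarrow>
            (\<exists>qs. (\<forall>\<kappa>>0. prob01 (qs \<kappa>)) \<and> weak_star_conv qs q \<and>
               Limsup (at_right 0) (\<lambda>\<kappa>. free_energy \<kappa> (\<pi> \<kappa>) (qs \<kappa>)) \<le> ereal (pot_energy V q)))"
proof -
  have Vz: "(INF y\<in>{0..1}. V y) = 0"
    using inf_V_zero[OF V_cont \<pi>_prob LDP_lower LDP_upper] by blast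
  show ?thesis
  proof (intro conjI allI impI)
    fix qs q
    assume "(\<forall>\<kappa>>0. prob01 (qs \<kappa>)) \<and> prob01 q \<and> weak_star_conv qs q"
    then show "ereal (pot_energy V q) \<le> Liminf (at_right 0) (\<lambda>\<kappa>. free_energy \<kappa> (\<pi> \<kappa>) (qs \<kappa>))"
      using part1[OF V_cont \<pi>_prob LDP_upper Vz] by blast
  next
    fix q :: "real measure"
    assume "prob01 q"
    then show "\<exists>qs. (\<forall>\<kappa>>0. prob01 (qs \<kappa>)) \<and> weak_star_conv qs q \<and>
               Limsup (at_right 0) (\<lambda>\<kappa>. free_energy \<kappa> (\<pi> \<kappa>) (qs \<kappa>)) \<le> ereal (pot_energy V q)"
      using part2[OF V_cont \<pi>_prob LDP_lower Vz] by blast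
  qed
qed

end
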